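(* Let $m,n,p,q\in\mathbb{R}$ with $m<0$. Set $u=\frac{2\sqrt{-m}}{\sqrt5}$, $\alpha=\frac{16n}{u^3}$, $\beta=\frac{16p}{u^4}-5$, $\gamma=\frac{16q}{u^5}$, and $f(\theta)=\alpha\cos^2\theta+\beta\cos\theta+\cos 5\theta+\gamma$. Then $f$ has at most four critical points in the open interval $(0,\pi)$, and consequently $f$ has at most five zeros in $[0,\pi]$. *)

theory Defs
  imports Complex_Main
begin

end

theory Submission
  imports Defs "HOL-Computational_Algebra.Polynomial"
begin

lemma cos5_expand: "cos (5 * (x::real)) = 16 * cos x ^ 5 - 20 * cos x ^ 3 + 5 * cos x"
proof -
  have s2: "sin x ^ 2 = 1 - cos x ^ 2" using sin_cos_squared_add[of x] by linarith
  have c2: "cos (2*x) = 2 * cos x ^ 2 - 1" by (simp add: cos_double_cos)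
  have sn2: "sin (2*x) = 2 * sin x * cos x" by (simp add: sin_double)
  have c3: "cos (3*x) = 4 * cos x ^ 3 - 3 * cos x" by (rule cos_treble_cos)
  have sn3: "sin (3*x) = sin x * (4 * cos x ^ 2 - 1)"
  proof -
    have "sin (3*x) = sin (2*x + x)" by simp
    also have "\<dots> = sin (2*x) * cos x + cos (2*x) * sin x" by (rule sin_add)
    finally have h: "sin (3*x) = sin (2*x) * cos x + cos (2*x) * sin x" .
    show ?thesis unfolding h sn2 c2 by (simp add: algebra_simps power2_eq_square)
  qed
  have "cos (5*x) = cos (3*x + 2*x)" by simp
  also have "\<dots> = cos (3*x) * cos (2*x) - sin (3*x) * sin (2*x)" by (rule cos_add)
  also have "\<dots> = (4 * cos x ^ 3 - 3 * cos x) * (2 * cos x ^ 2 - 1)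
      - 2 * sin x ^ 2 * cos x * (4 * cos x ^ 2 - 1)"
    unfolding c3 sn3 c2 sn2 by (simp add: power2_eq_square algebra_simps)
  also have "\<dots> = 16 * cos x ^ 5 - 20 * cos x ^ 3 + 5 * cos x"
    unfolding s2 by (simp add: algebra_simps power2_eq_square power3_eq_cube eval_nat_numeral)
  finally show ?thesis .
qed

lemma card_bound_cos:
  fixes P :: "real poly"
  assumes "P \<noteq> 0" "S \<subseteq> {\<theta>. 0 \<le> \<theta> \<and> \<theta> \<le> pi \<and> poly P (cos \<theta>) = 0}"
  shows "finite S \<and> card S \<le> degree P"
proof -
  have inj: "inj_on cos S"
    by (rule inj_onI) (use assms(2) cos_inj_pi in blast)
  have sub: "cos ` S \<subseteq> {x. poly P x = 0}" using assms(2) by auto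
  have fin: "finite {x. poly P x = 0}" by (rule poly_roots_finite[OF assms(1)])
  have "finite (cos ` S)" using sub fin finite_subset by blast
  hence "finite S" using inj finite_imageD by blast
  moreover have "card S = card (cos ` S)" using inj card_image by metis
  moreover have "card (cos ` S) \<le> card {x. poly P x = 0}" using card_mono[OF fin sub] .
  moreover have "card {x. poly P x = 0} \<le> degree P" by (rule card_poly_roots_bound[OF assms(1)])
  ultimately show ?thesis by linarith
qed

theorem proposition3:
  fixes m n p q :: real and u \<alpha> \<beta> \<gamma> :: real and f :: "real \<Rightarrow> real"
  assumes "m < 0"
  defines "u \<equiv> 2 * sqrt (- m) / sqrt 5"
  defines "\<alpha> \<equiv> 16 * n / u ^ 3"
  defines "\<beta> \<equiv> 16 * p / u ^ 4 - 5"
  defines "\<gamma> \<equiv> 16 * q / u ^ 5"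
  defines "f \<equiv> (\<lambda>\<theta>. \<alpha> * (cos \<theta>)\<^sup>2 + \<beta> * cos \<theta> + cos (5 * \<theta>) + \<gamma>)"
  shows "finite {\<theta> \<in> {0<..<pi}. (f has_real_derivative 0) (at \<theta>)}
         \<and> card {\<theta> \<in> {0<..<pi}. (f has_real_derivative 0) (at \<theta>)} \<le> 4
         \<and> finite {\<theta> \<in> {0..pi}. f \<theta> = 0}
         \<and> card {\<theta> \<in> {0..pi}. f \<theta> = 0} \<le> 5"
proof -
  define P5 :: "real poly" where "P5 = [:\<gamma>, 5 + \<beta>, \<alpha>, -20, 0, 16:]"
  define P4 :: "real poly" where "P4 = [:5 + \<beta>, 2 * \<alpha>, -60, 0, 80:]"
  have P5nz: "P5 \<noteq> 0" and dP5: "degree P5 = 5" unfolding P5_def by simp_all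
  have P4nz: "P4 \<noteq> 0" and dP4: "degree P4 = 4" unfolding P4_def by simp_all
  have fP: "f t = poly P5 (cos t)" for t
    unfolding f_def P5_def cos5_expand
    by (simp add: algebra_simps power2_eq_square power3_eq_cube eval_nat_numeral)
  have der: "(f has_real_derivative (- sin t * poly P4 (cos t))) (at t)" for t
  proof -
    have "((\<lambda>t. poly P5 (cos t)) has_real_derivative (poly (pderiv P5) (cos t) * (- sin t))) (at t)"
      by (rule DERIV_chain2[OF poly_DERIV DERIV_cos])
    moreover have "pderiv P5 = P4" unfolding P5_def P4_def
      by (simp add: pderiv_pCons)
    moreover have "f = (\<lambda>t. poly P5 (cos t))" using fP by auto
    ultimately show ?thesis by (simp add: mult.commute)
  qed
  have A: "{\<theta> \<in> {0<..<pi}. (f has_real_derivative 0) (at \<theta>)}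
      \<subseteq> {\<theta>. 0 \<le> \<theta> \<and> \<theta> \<le> pi \<and> poly P4 (cos \<theta>) = 0}"
  proof safe
    fix t assume t: "t \<in> {0<..<pi}" and d: "(f has_real_derivative 0) (at t)"
    have "- sin t * poly P4 (cos t) = 0" using DERIV_unique[OF der d] .
    moreover have "sin t > 0" using t sin_gt_zero by auto
    ultimately show "poly P4 (cos t) = 0" by simp
  qed auto
  have B: "{\<theta> \<in> {0..pi}. f \<theta> = 0} \<subseteq> {\<theta>. 0 \<le> \<theta> \<and> \<theta> \<le> pi \<and> poly P5 (cos \<theta>) = 0}"
    using fP by auto
  show ?thesis using card_bound_cos[OF P4nz A] card_bound_cos[OF P5nz B] dP4 dP5 by simp
qed

end
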